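(* Let $K\subseteq\mathbb{R}^{n}$ be compact, $T\subseteq\mathbb{R}^{n}$ compact with non-empty interior, $\delta>0$, and let $\Lambda(\delta)\subseteq K$ be a finite $\delta$-net for $K$. Then \[ N_{\omega}(K,T+\delta B_{2}^{n})\le N_{\omega}(K,T,\Lambda(\delta)). \]
   Context: $B_2^n$ is the closed Euclidean unit ball; a set $\Lambda$ is a $\delta$-net for $A$ if $A\subseteq\Lambda+\delta B_2^n$. $\mathbbm{1}_A$ is the indicator of $A$. $N_\omega(K,T)$ is the infimum of $\sum_i\omega_i$ over finite families $\{(x_i,\omega_i)\}$ with $x_i\in\mathbb{R}^n$, $\omega_i\ge0$, and $\sum_i\omega_i\mathbbm{1}_{T}(x-x_i)\ge1$ for all $x\in K$. For a finite set $\Lambda\subseteq\mathbb{R}^n$, $N_\omega(K,T,\Lambda)$ is the infimum of $\sum_{i}\omega_i$ over finite families $\{(x_i,\omega_i)\}$ with $x_i\in\Lambda$, $\omega_i\ge0$, such that $\sum_i\omega_i\mathbbm{1}_T(x-x_i)\ge\mathbbm{1}_K(x)$ for all $x\in\Lambda$. *)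

theory Defs
  imports "HOL-Analysis.Analysis" "HOL-Library.Extended_Real"
begin

text \<open>Finite weighted families are lists of pairs (point, weight).
  Infima are taken in the extended reals, so that an infimum over an empty
  set of admissible families is +\<infinity>.\<close>

definition N_omega :: "'a::euclidean_space set \<Rightarrow> 'a set \<Rightarrow> ereal" where
  "N_omega K T = Inf {ereal (\<Sum>(x,w)\<leftarrow>F. w) | F.
      (\<forall>(x,w)\<in>set F. w \<ge> 0) \<and>
      (\<forall>z\<in>K. (\<Sum>(x,w)\<leftarrow>F. w * indicator T (z - x)) \<ge> (1::real))}"

definition N_omega_net :: "'a::euclidean_space set \<Rightarrow> 'a set \<Rightarrow> 'a set \<Rightarrow> ereal" where
  "N_omega_net K T \<Lambda> = Inf {ereal (\<Sum>(x,w)\<leftarrow>F. w) | F.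
      (\<forall>(x,w)\<in>set F. x \<in> \<Lambda> \<and> w \<ge> 0) \<and>
      (\<forall>z\<in>\<Lambda>. (\<Sum>(x,w)\<leftarrow>F. w * indicator T (z - x)) \<ge> (indicator K z :: real))}"

end

theory Submission
  imports Defs
begin

theorem lemma2p2:
  fixes K T \<Lambda> :: "'a::euclidean_space set" and \<delta> :: real
  assumes "compact K" and "compact T" and "interior T \<noteq> {}" and "\<delta> > 0"
    and "finite \<Lambda>" and "\<Lambda> \<subseteq> K"
    and "K \<subseteq> {l + d | l d. l \<in> \<Lambda> \<and> d \<in> cball 0 \<delta>}"
  shows "N_omega K {t + d | t d. t \<in> T \<and> d \<in> cball 0 \<delta>} \<le> N_omega_net K T \<Lambda>"
proof -
  let ?S = "{t + d | t d. t \<in> T \<and> d \<in> cball 0 \<delta>}"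
  have sub: "{ereal (\<Sum>(x,w)\<leftarrow>F. w) | F.
      (\<forall>(x,w)\<in>set F. x \<in> \<Lambda> \<and> w \<ge> 0) \<and>
      (\<forall>z\<in>\<Lambda>. (\<Sum>(x,w)\<leftarrow>F. w * indicator T (z - x)) \<ge> (indicator K z :: real))}
    \<subseteq> {ereal (\<Sum>(x,w)\<leftarrow>F. w) | F.
      (\<forall>(x,w)\<in>set F. w \<ge> 0) \<and>
      (\<forall>z\<in>K. (\<Sum>(x,w)\<leftarrow>F. w * indicator ?S (z - x)) \<ge> (1::real))}"
  proof
    fix v assume "v \<in> {ereal (\<Sum>(x,w)\<leftarrow>F. w) | F.
      (\<forall>(x,w)\<in>set F. x \<in> \<Lambda> \<and> w \<ge> 0) \<and>
      (\<forall>z\<in>\<Lambda>. (\<Sum>(x,w)\<leftarrow>F. w * indicator T (z - x)) \<ge> (indicator K z :: real))}"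
    then obtain F where v: "v = ereal (\<Sum>(x,w)\<leftarrow>F. w)"
      and F1: "\<forall>(x,w)\<in>set F. x \<in> \<Lambda> \<and> w \<ge> 0"
      and F2: "\<forall>z\<in>\<Lambda>. (\<Sum>(x,w)\<leftarrow>F. w * indicator T (z - x)) \<ge> (indicator K z :: real)"
      by blast
    have "\<forall>z\<in>K. (\<Sum>(x,w)\<leftarrow>F. w * indicator ?S (z - x)) \<ge> (1::real)"
    proof
      fix z assume "z \<in> K"
      then obtain l d where l: "l \<in> \<Lambda>" and d: "d \<in> cball 0 \<delta>" and z: "z = l + d"
        using assms(7) by blast
      have "1 = (indicator K l :: real)" using l assms(6) by auto
      also have "\<dots> \<le> (\<Sum>(x,w)\<leftarrow>F. w * indicator T (l - x))" using F2 l by blast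
      also have "\<dots> \<le> (\<Sum>(x,w)\<leftarrow>F. w * indicator ?S (z - x))"
      proof (rule sum_list_mono)
        fix p assume p: "p \<in> set F"
        obtain x w where p': "p = (x,w)" by fastforce
        have w: "w \<ge> 0" using F1 p p' by auto
        have "indicator T (l - x) \<le> (indicator ?S (z - x) :: real)"
        proof (cases "l - x \<in> T")
          case True
          have "z - x = (l - x) + d" using z by (simp add: algebra_simps)
          hence "z - x \<in> ?S" using True d by blast
          thus ?thesis by simp
        next
          case False thus ?thesis by (simp add: indicator_def)
        qed
        thus "(case p of (x, w) \<Rightarrow> w * indicator T (l - x))
              \<le> (case p of (x, w) \<Rightarrow> w * indicator ?S (z - x))"
          using w p' by (simp add: mult_left_mono)
      qed
      finally show "(\<Sum>(x,w)\<leftarrow>F. w * indicator ?S (z - x)) \<ge> (1::real)" .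
    qed
    moreover have "\<forall>(x,w)\<in>set F. w \<ge> 0" using F1 by auto
    ultimately show "v \<in> {ereal (\<Sum>(x,w)\<leftarrow>F. w) | F.
      (\<forall>(x,w)\<in>set F. w \<ge> 0) \<and>
      (\<forall>z\<in>K. (\<Sum>(x,w)\<leftarrow>F. w * indicator ?S (z - x)) \<ge> (1::real))}"
      using v by blast
  qed
  show ?thesis unfolding N_omega_def N_omega_net_def
    by (rule Inf_superset_mono[OF sub])
qed

end
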